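(* Let $m\ge1$ be an integer and $\delta_1>0$. There is $\delta_2=\delta_2(\delta_1)>0$ such that if $u\in E_0$ satisfies $E(u)\le 2E(Q)-\delta_1$, then $|u(r)|\le\pi-\delta_2$ for all $r\geq 0$.
   Context: $E(u)=\frac12\int_0^\infty\big(u_r^2+\frac{m^2\sin^2 u}{r^2}\big)r\,dr$; $Q(r)=\pi-2\arctan(r^m)$, so $E(Q)=2m$. $E_0=\{u:[0,\infty)\to\mathbb R\;:\;E(u)<2E(Q),\ \lim_{r\to0^+}u(r)=0,\ \lim_{r\to\infty}u(r)=0\}$. *)

theory Defs
  imports "HOL-Analysis.Analysis"
begin

definition Qprof :: "nat \<Rightarrow> real \<Rightarrow> real" where
  "Qprof m r = pi - 2 * arctan (r ^ m)"

text \<open>Locally absolutely continuous on (0,infinity): u is the indefinite integral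
  of a locally Lebesgue integrable function (the natural class on which u_r makes sense).\<close>
definition loc_abs_cont :: "(real \<Rightarrow> real) \<Rightarrow> bool" where
  "loc_abs_cont u \<longleftrightarrow> (\<exists>g. \<forall>a b. 0 < a \<longrightarrow> a \<le> b \<longrightarrow>
      set_integrable lborel {a..b} g \<and> u b - u a = (LBINT t=a..b. g t))"

definition energy :: "nat \<Rightarrow> (real \<Rightarrow> real) \<Rightarrow> ennreal" where
  "energy m u = (\<integral>\<^sup>+ r. indicator {0<..} r *
      ennreal ((1/2) * ((deriv u r)\<^sup>2 + (real m)\<^sup>2 * (sin (u r))\<^sup>2 / r\<^sup>2) * r) \<partial>lborel)"

definition E0 :: "nat \<Rightarrow> (real \<Rightarrow> real) set" where
  "E0 m = {u. loc_abs_cont u \<and> continuous_on {0..} u \<and>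
      energy m u < 2 * energy m (Qprof m) \<and>
      (u \<longlongrightarrow> 0) (at_right 0) \<and> (u \<longlongrightarrow> 0) at_top}"

end

theory Submission
  imports Defs
begin

lemma key_negligible:
  fixes u g :: "real \<Rightarrow> real" and a b q \<eta> :: real
  assumes gi: "set_integrable lborel {a..b} g"
    and ug: "\<And>x y. a \<le> x \<Longrightarrow> x \<le> y \<Longrightarrow> y \<le> b \<Longrightarrow> u y - u x = (LINT t:{x..y}|lborel. g t)"
    and eta: "\<eta> > 0"
  shows "negligible {x\<in>{a<..<b}. g x < q \<and> (\<forall>d>0. \<exists>y\<in>{a<..<b}. y \<noteq> x \<and> \<bar>y - x\<bar> < d \<and> q + \<eta> < (u y - u x) / (y - x))}"
    (is "negligible ?S")
proof -
  define G where "G t = indicator {a..b} t * g t" for t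
  have Gi: "integrable lborel G" using gi unfolding set_integrable_def G_def by simp
  have [measurable]: "G \<in> borel_measurable borel"
    using borel_measurable_integrable[OF Gi] by simp
  define h where "h t = max 0 (G t - q * indicator {a..b} t)" for t
  have i1: "integrable lborel (\<lambda>x. q * indicator {a..b} x :: real)"
    by (intro integrable_mult_right integrable_real_indicator) (auto simp: emeasure_lborel_Icc_eq)
  have i2: "integrable lborel (\<lambda>x. G x - q * indicator {a..b} x)"
    using Gi i1 by (rule Bochner_Integration.integrable_diff)
  have hi: "integrable lborel h" unfolding h_def
    using integrable_max[OF integrable_zero i2] by simp
  have [measurable]: "h \<in> borel_measurable borel"
    using borel_measurable_integrable[OF hi] by simp
  have hnn: "0 \<le> h t" for t unfolding h_def by simp
  define M' where "M' = density lborel (\<lambda>t. ennreal (h t))"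
  have sM': "sets M' = sets borel" unfolding M'_def by simp
  have fin: "emeasure M' (space M') \<noteq> \<infinity>"
  proof -
    have "emeasure M' (space M') = (\<integral>\<^sup>+ t. ennreal (h t) \<partial>lborel)"
      unfolding M'_def by (simp add: emeasure_density)
    also have "\<dots> = ennreal (integral\<^sup>L lborel h)"
      using hi hnn by (intro nn_integral_eq_integral) auto
    finally show ?thesis by simp
  qed
  define Z where "Z = {t. h t = 0}"
  have Zb: "Z \<in> sets borel" unfolding Z_def by measurable
  have Z0: "emeasure M' Z = 0"
  proof -
    have "emeasure M' Z = (\<integral>\<^sup>+ t. ennreal (h t) * indicator Z t \<partial>lborel)"
      unfolding M'_def using Zb by (simp add: emeasure_density)
    also have "\<dots> = (\<integral>\<^sup>+ t. 0 \<partial>(lborel :: real measure))"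
      by (rule nn_integral_cong) (auto simp: Z_def indicator_def)
    finally show ?thesis by simp
  qed
  have SZ: "?S \<subseteq> Z"
    by (auto simp: Z_def h_def G_def indicator_def)
  show ?thesis
    unfolding negligible_outer_le
  proof (intro allI impI)
    fix e :: real assume "e > 0"
    have "emeasure M' Z = (INF U \<in> {U. Z \<subseteq> U \<and> open U}. emeasure M' U)"
      using outer_regular[OF sM' fin Zb] .
    then have "(INF U \<in> {U. Z \<subseteq> U \<and> open U}. emeasure M' U) < ennreal (\<eta> * e)"
      using Z0 \<open>e > 0\<close> eta by simp
    then obtain U where U: "Z \<subseteq> U" "open U" and MU: "emeasure M' U < ennreal (\<eta> * e)"
      by (auto simp: INF_less_iff)
    define K where "K = {(c, r). 0 < r \<and> cball c r \<subseteq> U \<inter> {a..b} \<and>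
                             ennreal (\<eta> * (2 * r)) \<le> emeasure M' (cball c r)}"
    have cover: "\<exists>i. i \<in> K \<and> x \<in> cball (fst i) (snd i) \<and> snd i < d" if x: "x \<in> ?S" and "0 < d" for x d
    proof -
      have "x \<in> U" using x SZ U(1) by auto
      then obtain d0 where d0: "d0 > 0" "ball x d0 \<subseteq> U" using U(2) openE by blast
      have xab: "x \<in> {a<..<b}" using x by auto
      obtain y where y: "y \<in> {a<..<b}" "y \<noteq> x" "\<bar>y - x\<bar> < min d d0" "q + \<eta> < (u y - u x) / (y - x)"
        using x \<open>0 < d\<close> d0(1) by (auto dest!: spec[of _ "min d d0"])
      define lo where "lo = min x y"
      define hi where "hi = max x y"
      have lohi: "lo < hi" using y(2) unfolding lo_def hi_def by auto
      have quo: "(u y - u x) / (y - x) = (u hi - u lo) / (hi - lo)"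
        unfolding lo_def hi_def by (cases "x \<le> y") (auto simp: field_simps)
      have len: "hi - lo = \<bar>y - x\<bar>" unfolding lo_def hi_def by auto
      have gt: "(q + \<eta>) * (hi - lo) < u hi - u lo"
        using y(4) lohi unfolding quo by (simp add: pos_less_divide_eq)
      have sub: "{lo..hi} \<subseteq> {a..b}" using xab y(1) unfolding lo_def hi_def by auto
      have int: "u hi - u lo = (LINT t:{lo..hi}|lborel. g t)"
        using sub lohi by (intro ug) auto
      have cb: "cball ((lo + hi) / 2) ((hi - lo) / 2) = {lo..hi}"
        by (auto simp: cball_eq_atLeastAtMost field_simps)
      have subU: "{lo..hi} \<subseteq> U"
      proof
        fix t assume "t \<in> {lo..hi}"
        then have "dist x t < d0" using y(3) unfolding lo_def hi_def dist_real_def by auto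
        then show "t \<in> U" using d0(2) by auto
      qed
      have gi2: "integrable lborel (\<lambda>t. indicator {lo..hi} t * g t)"
        using set_integrable_subset[OF gi _ sub] unfolding set_integrable_def by auto
      have hi2: "integrable lborel (\<lambda>t. h t * indicator {lo..hi} t)"
        by (rule integrable_real_mult_indicator[OF _ hi]) auto
      have i3: "integrable lborel (\<lambda>t. q * indicator {lo..hi} t :: real)"
        by (intro integrable_mult_right integrable_real_indicator) (auto simp: emeasure_lborel_Icc_eq)
      have "(LINT t:{lo..hi}|lborel. g t) - q * (hi - lo)
          = (\<integral>t. indicator {lo..hi} t * g t - q * indicator {lo..hi} t \<partial>lborel)"
        using gi2 i3 lohi by (simp add: set_lebesgue_integral_def)
      also have "\<dots> = (\<integral>t. (G t - q * indicator {a..b} t) * indicator {lo..hi} t \<partial>lborel)"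
        using sub by (intro Bochner_Integration.integral_cong) (auto simp: G_def indicator_def)
      also have "\<dots> \<le> (\<integral>t. h t * indicator {lo..hi} t \<partial>lborel)"
      proof (rule integral_mono[OF _ hi2])
        show "integrable lborel (\<lambda>t. (G t - q * indicator {a..b} t) * indicator {lo..hi} t)"
          by (rule integrable_real_mult_indicator[OF _ i2]) auto
        show "(G t - q * indicator {a..b} t) * indicator {lo..hi} t \<le> h t * indicator {lo..hi} t" for t
          by (auto simp: h_def indicator_def)
      qed
      finally have A: "\<eta> * (hi - lo) \<le> (\<integral>t. h t * indicator {lo..hi} t \<partial>lborel)"
        using gt int by (simp add: algebra_simps)
      have "emeasure M' {lo..hi} = (\<integral>\<^sup>+ t. ennreal (h t * indicator {lo..hi} t) \<partial>lborel)"
        unfolding M'_def by (subst emeasure_density) (auto intro!: nn_integral_cong simp: indicator_def)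
      also have "\<dots> = ennreal (\<integral>t. h t * indicator {lo..hi} t \<partial>lborel)"
        using hi2 hnn by (intro nn_integral_eq_integral) auto
      finally have "ennreal (\<eta> * (2 * ((hi - lo) / 2))) \<le> emeasure M' (cball ((lo + hi) / 2) ((hi - lo) / 2))"
        using A unfolding cb by (metis ennreal_leI nonzero_mult_div_cancel_left zero_neq_numeral times_divide_eq_right)
      then have "((lo + hi) / 2, (hi - lo) / 2) \<in> K"
        unfolding K_def using lohi cb subU sub by auto
      moreover have "x \<in> {lo..hi}" unfolding lo_def hi_def by auto
      then have "x \<in> cball ((lo + hi) / 2) ((hi - lo) / 2)" using cb by simp
      moreover have "(hi - lo) / 2 < d" using len y(3) by auto
      ultimately show ?thesis by (intro exI[of _ "((lo + hi) / 2, (hi - lo) / 2)"]) auto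
    qed
    obtain C where C: "countable C" "C \<subseteq> K"
      and pw: "pairwise (\<lambda>i j. disjnt (cball (fst i) (snd i)) (cball (fst j) (snd j))) C"
      and neg: "negligible (?S - (\<Union>i\<in>C. cball (fst i) (snd i)))"
    proof -
      have Kpos: "\<And>i. i \<in> K \<Longrightarrow> 0 < snd i" unfolding K_def by auto
      show ?thesis
        apply (rule Vitali_covering_theorem_cballs[of K snd ?S fst])
          apply (erule Kpos)
         apply (erule (1) cover)
        apply (erule (3) that)
        done
    qed
    define V where "V = (\<Union>i\<in>C. cball (fst i) (snd i))"
    have KU: "cball (fst i) (snd i) \<subseteq> U \<inter> {a..b}" if "i \<in> K" for i
      using that unfolding K_def by (cases i) auto
    have VK: "V \<subseteq> U \<inter> {a..b}" using C(2) KU unfolding V_def by blast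
    have Vb: "V \<in> sets borel" unfolding V_def using C(1)
      by (intro sets.countable_UN'') auto
    have disj: "disjoint_family_on (\<lambda>i. cball (fst i) (snd i)) C"
      using pw unfolding disjoint_family_on_def pairwise_def disjnt_def by auto
    have "ennreal \<eta> * emeasure lborel V = ennreal \<eta> * (\<integral>\<^sup>+ i. emeasure lborel (cball (fst i) (snd i)) \<partial>count_space C)"
      unfolding V_def using C(1) disj by (subst emeasure_UN_countable) auto
    also have "\<dots> = (\<integral>\<^sup>+ i. ennreal \<eta> * emeasure lborel (cball (fst i) (snd i)) \<partial>count_space C)"
      by (simp add: nn_integral_cmult)
    also have "\<dots> \<le> (\<integral>\<^sup>+ i. emeasure M' (cball (fst i) (snd i)) \<partial>count_space C)"
    proof (intro nn_integral_mono)
      fix i assume "i \<in> space (count_space C)"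
      then have "i \<in> K" using C(2) by auto
      then show "ennreal \<eta> * emeasure lborel (cball (fst i) (snd i)) \<le> emeasure M' (cball (fst i) (snd i))"
        using eta unfolding K_def by (auto simp: cball_eq_atLeastAtMost ennreal_mult'[symmetric])
    qed
    also have "\<dots> = emeasure M' V"
      unfolding V_def using C(1) disj sM' by (subst emeasure_UN_countable) auto
    also have "\<dots> \<le> emeasure M' U"
      using VK U(2) sM' by (intro emeasure_mono) auto
    finally have "ennreal \<eta> * emeasure lborel V < ennreal (\<eta> * e)" using MU by simp
    moreover have Vfin: "emeasure lborel V < \<infinity>"
    proof -
      have "emeasure lborel V \<le> emeasure lborel {a..b}" using VK by (intro emeasure_mono) auto
      moreover have "emeasure lborel {a..b} < \<infinity>" by (simp add: emeasure_lborel_Icc_eq)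
      ultimately show ?thesis by (rule le_less_trans)
    qed
    ultimately have "ennreal \<eta> * ennreal (measure lborel V) < ennreal (\<eta> * e)"
      by (simp add: emeasure_eq_ennreal_measure)
    then have mV: "measure lborel V < e"
      using eta by (simp add: ennreal_mult'[symmetric] ennreal_less_iff)
    show "\<exists>T. ?S \<subseteq> T \<and> T \<in> lmeasurable \<and> measure lebesgue T \<le> e"
    proof (intro exI conjI)
      show "?S \<subseteq> V \<union> (?S - V)" by auto
      have "V \<in> lmeasurable" using Vb Vfin by (intro fmeasurableI) auto
      moreover have "?S - V \<in> lmeasurable" using neg unfolding V_def by (rule negligible_imp_measurable)
      ultimately show "V \<union> (?S - V) \<in> lmeasurable" by (rule fmeasurable.Un)
      have "?S - V \<in> null_sets lebesgue" using neg unfolding V_def negligible_iff_null_sets .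
      then have "measure lebesgue (V \<union> (?S - V)) = measure lebesgue V"
        using Vb by (intro measure_Un_null_set) auto
      also have "\<dots> = measure lborel V" using Vb by simp
      finally show "measure lebesgue (V \<union> (?S - V)) \<le> e" using mV by simp
    qed
  qed
qed

lemma upper_negligible:
  fixes u g :: "real \<Rightarrow> real" and a b :: real
  assumes gi: "set_integrable lborel {a..b} g"
    and ug: "\<And>x y. a \<le> x \<Longrightarrow> x \<le> y \<Longrightarrow> y \<le> b \<Longrightarrow> u y - u x = (LINT t:{x..y}|lborel. g t)"
  shows "negligible {x\<in>{a<..<b}. \<not> (\<forall>e>0. \<exists>d>0. \<forall>y\<in>{a<..<b}. y \<noteq> x \<and> \<bar>y - x\<bar> < d \<longrightarrow> (u y - u x) / (y - x) \<le> g x + e)}"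
proof -
  define S where "S p = {x\<in>{a<..<b}. g x < fst p \<and> (\<forall>d>0. \<exists>y\<in>{a<..<b}. y \<noteq> x \<and> \<bar>y - x\<bar> < d \<and> fst p + snd p < (u y - u x) / (y - x))}" for p
  have neg: "negligible (\<Union>(S ` (\<rat> \<times> (\<rat> \<inter> {0<..}))))"
  proof (rule negligible_countable_Union)
    show "countable (S ` (\<rat> \<times> (\<rat> \<inter> {0<..})))"
      by (intro countable_image countable_SIGMA countable_Int1 countable_rat)
    fix T assume "T \<in> S ` (\<rat> \<times> (\<rat> \<inter> {0<..}))"
    then obtain q \<eta> where "T = S (q, \<eta>)" "\<eta> > 0" by auto
    then show "negligible T" unfolding S_def using key_negligible[OF gi ug, of \<eta> q] by auto
  qed
  show ?thesis
  proof (rule negligible_subset[OF neg], rule subsetI)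
    fix x assume "x \<in> {x\<in>{a<..<b}. \<not> (\<forall>e>0. \<exists>d>0. \<forall>y\<in>{a<..<b}. y \<noteq> x \<and> \<bar>y - x\<bar> < d \<longrightarrow> (u y - u x) / (y - x) \<le> g x + e)}"
    then have x: "x \<in> {a<..<b}" and nx: "\<not> (\<forall>e>0. \<exists>d>0. \<forall>y\<in>{a<..<b}. y \<noteq> x \<and> \<bar>y - x\<bar> < d \<longrightarrow> (u y - u x) / (y - x) \<le> g x + e)"
      by auto
    from nx obtain e where e: "e > 0" and ne: "\<And>d. d > 0 \<Longrightarrow> \<exists>y\<in>{a<..<b}. y \<noteq> x \<and> \<bar>y - x\<bar> < d \<and> g x + e < (u y - u x) / (y - x)"
      by (auto simp: not_le)
    obtain q where q: "q \<in> \<rat>" "g x < q" "q < g x + e/2" using Rats_dense_in_real[of "g x" "g x + e/2"] e by auto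
    obtain \<eta> where eta: "\<eta> \<in> \<rat>" "0 < \<eta>" "\<eta> < e/2" using Rats_dense_in_real[of 0 "e/2"] e by auto
    have "\<exists>y\<in>{a<..<b}. y \<noteq> x \<and> \<bar>y - x\<bar> < d \<and> q + \<eta> < (u y - u x) / (y - x)" if dpos: "d > 0" for d
    proof -
      obtain y where "y \<in> {a<..<b}" "y \<noteq> x" "\<bar>y - x\<bar> < d" "g x + e < (u y - u x) / (y - x)" using ne[OF dpos] by blast
      then show ?thesis using q eta by (intro bexI[of _ y]) auto
    qed
    then have "x \<in> S (q, \<eta>)" unfolding S_def using x q eta by auto
    then show "x \<in> \<Union>(S ` (\<rat> \<times> (\<rat> \<inter> {0<..})))" using q eta by auto
  qed
qed

lemma deriv_ae:
  fixes u g :: "real \<Rightarrow> real" and a b :: real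
  assumes gi: "set_integrable lborel {a..b} g"
    and ug: "\<And>x y. a \<le> x \<Longrightarrow> x \<le> y \<Longrightarrow> y \<le> b \<Longrightarrow> u y - u x = (LINT t:{x..y}|lborel. g t)"
  shows "AE x in lborel. x \<in> {a<..<b} \<longrightarrow> (u has_real_derivative g x) (at x)"
proof -
  let ?B = "\<lambda>u g. {x\<in>{a<..<b}. \<not> (\<forall>e>0. \<exists>d>0. \<forall>y\<in>{a<..<b}. y \<noteq> x \<and> \<bar>y - x\<bar> < d \<longrightarrow> (u y - u x) / (y - x) \<le> g x + e)}"
  have n1: "negligible (?B u g)" by (rule upper_negligible[OF gi ug])
  have gi': "set_integrable lborel {a..b} (\<lambda>t. - g t)"
    using gi by (rule set_integrable_mult_right[where a="-1", simplified])
  have ug': "(- u y) - (- u x) = (LINT t:{x..y}|lborel. - g t)" if "a \<le> x" "x \<le> y" "y \<le> b" for x y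
    using ug[OF that] set_integral_mult_right[where a="-1" and f=g and A="{x..y}" and M=lborel] by simp
  have n2: "negligible (?B (\<lambda>t. - u t) (\<lambda>t. - g t))"
    by (rule upper_negligible[OF gi']) (use ug' in auto)
  have "negligible (?B u g \<union> ?B (\<lambda>t. - u t) (\<lambda>t. - g t))" using n1 n2 by (rule negligible_Un)
  then have "AE x in lebesgue. x \<notin> ?B u g \<union> ?B (\<lambda>t. - u t) (\<lambda>t. - g t)"
    unfolding negligible_iff_null_sets by (rule AE_not_in)
  then have "AE x in lborel. x \<notin> ?B u g \<union> ?B (\<lambda>t. - u t) (\<lambda>t. - g t)"
    by (simp add: AE_completion_iff)
  then show ?thesis
  proof (rule AE_mp, intro AE_I2 impI)
    fix x assume nb: "x \<notin> ?B u g \<union> ?B (\<lambda>t. - u t) (\<lambda>t. - g t)" and x: "x \<in> {a<..<b}"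
    have up: "\<exists>d>0. \<forall>y\<in>{a<..<b}. y \<noteq> x \<and> \<bar>y - x\<bar> < d \<longrightarrow> (u y - u x) / (y - x) \<le> g x + e" if "e > 0" for e
      using nb x that by blast
    have lo: "\<exists>d>0. \<forall>y\<in>{a<..<b}. y \<noteq> x \<and> \<bar>y - x\<bar> < d \<longrightarrow> g x - e \<le> (u y - u x) / (y - x)" if epos: "e > 0" for e
    proof -
      obtain d where d: "d > 0" "\<forall>y\<in>{a<..<b}. y \<noteq> x \<and> \<bar>y - x\<bar> < d \<longrightarrow> (- u y - - u x) / (y - x) \<le> - g x + e"
        using nb x epos by blast
      have eq: "(- u y - - u x) / (y - x) = - ((u y - u x) / (y - x))" for y
      proof -
        have "- u y - - u x = - (u y - u x)" by simp
        then show ?thesis by (simp only: minus_divide_left)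
      qed
      show ?thesis
      proof (intro exI[of _ d] conjI ballI impI)
        fix y assume "y \<in> {a<..<b}" "y \<noteq> x \<and> \<bar>y - x\<bar> < d"
        then have "(- u y - - u x) / (y - x) \<le> - g x + e" using d(2) by blast
        then show "g x - e \<le> (u y - u x) / (y - x)" unfolding eq by linarith
      qed (rule d(1))
    qed
    show "(u has_real_derivative g x) (at x)"
      unfolding has_field_derivative_iff
    proof (rule LIM_I)
      fix r :: real assume "r > 0"
      obtain d1 where d1: "d1 > 0" "\<forall>y\<in>{a<..<b}. y \<noteq> x \<and> \<bar>y - x\<bar> < d1 \<longrightarrow> (u y - u x) / (y - x) \<le> g x + r/2"
        using up[of "r/2"] \<open>r > 0\<close> by auto
      obtain d2 where d2: "d2 > 0" "\<forall>y\<in>{a<..<b}. y \<noteq> x \<and> \<bar>y - x\<bar> < d2 \<longrightarrow> g x - r/2 \<le> (u y - u x) / (y - x)"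
        using lo[of "r/2"] \<open>r > 0\<close> by auto
      define s where "s = min (min d1 d2) (min (x - a) (b - x))"
      have "s > 0" using d1 d2 x unfolding s_def by auto
      moreover have "norm ((u y - u x) / (y - x) - g x) < r" if "y \<noteq> x" "norm (y - x) < s" for y
      proof -
        have "y \<in> {a<..<b}" using that unfolding s_def by auto
        then show ?thesis using d1 d2 that \<open>r > 0\<close> unfolding s_def by fastforce
      qed
      ultimately show "\<exists>s>0. \<forall>y. y \<noteq> x \<and> norm (y - x) < s \<longrightarrow> norm ((u y - u x) / (y - x) - g x) < r"
        by blast
    qed
  qed
qed

lemma Q_deriv:
  fixes k :: nat
  shows "(Qprof (Suc k) has_real_derivative (-2 * (real (Suc k) * r^k) / (1 + r^(2*k+2)))) (at r)"
proof -
  have d1: "((\<lambda>r. r^Suc k) has_real_derivative real (Suc k) * r^k) (at r)"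
    using DERIV_pow[of "Suc k" r] by simp
  have d2: "(arctan has_real_derivative inverse (1 + (r^Suc k)\<^sup>2)) (at (r^Suc k))"
    by (rule DERIV_arctan)
  have "((\<lambda>r. arctan (r ^ Suc k)) has_real_derivative
     (inverse (1 + (r^Suc k)\<^sup>2) * (real (Suc k) * r^k))) (at r)"
    using DERIV_chain2[OF d2 d1] .
  note d3 = this
  then have d4: "((\<lambda>r. pi - 2 * arctan (r ^ Suc k)) has_real_derivative
     (0 - 2 * (inverse (1 + (r^Suc k)\<^sup>2) * (real (Suc k) * r^k)))) (at r)"
    using DERIV_diff[OF DERIV_const[of pi] DERIV_cmult[OF d3, of 2]] by simp
  have sq: "(r^Suc k)\<^sup>2 = r^(2*k+2)"
  proof -
    have e: "Suc k * 2 = 2*k+2" by simp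
    show ?thesis using power_mult[of r "Suc k" 2] unfolding e by simp
  qed
  have D: "1 + r^(2*k+2) \<noteq> 0"
  proof -
    have "0 \<le> r^(2*k+2)" by (rule zero_le_even_power) simp
    then show ?thesis by linarith
  qed
  have eqv: "0 - 2 * (inverse (1 + (r^Suc k)\<^sup>2) * (real (Suc k) * r^k)) = -2 * (real (Suc k) * r^k) / (1 + r^(2*k+2))"
    unfolding sq using D by (simp add: divide_simps)
  have Qe: "Qprof (Suc k) = (\<lambda>r. pi - 2 * arctan (r ^ Suc k))" by (simp add: Qprof_def fun_eq_iff)
  show ?thesis unfolding Qe eqv[symmetric] by (rule d4)
qed

lemma sin_Q:
  "sin (Qprof m r) = 2 * r^m / (1 + r^(2*m))"
proof -
  define x where "x = r^m"
  have x2: "x\<^sup>2 = r^(2*m)" unfolding x_def by (rule power_even_eq[symmetric])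
  have pos: "1 + x\<^sup>2 > 0" by (simp add: add_pos_nonneg)
  have sq: "sqrt (1 + x\<^sup>2) * sqrt (1 + x\<^sup>2) = 1 + x\<^sup>2"
    using real_sqrt_mult_self[of "1 + x\<^sup>2"] pos by simp
  have "sin (Qprof m r) = sin (2 * arctan x)" by (simp add: Qprof_def x_def)
  also have "\<dots> = 2 * sin (arctan x) * cos (arctan x)" by (rule sin_double)
  also have "\<dots> = 2 * x / (sqrt (1 + x\<^sup>2) * sqrt (1 + x\<^sup>2))" by (simp add: sin_arctan cos_arctan)
  also have "\<dots> = 2 * x / (1 + x\<^sup>2)" unfolding sq ..
  finally have "sin (Qprof m r) = 2 * x / (1 + x\<^sup>2)" .
  then show ?thesis unfolding x2 by (simp only: x_def)
qed

lemma Q_integrand: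
  fixes k :: nat and r :: real
  assumes "r > 0"
  shows "(1/2) * ((deriv (Qprof (Suc k)) r)\<^sup>2 + (real (Suc k))\<^sup>2 * (sin (Qprof (Suc k) r))\<^sup>2 / r\<^sup>2) * r
     = 4 * (real (Suc k))\<^sup>2 * r^(2*k+1) / (1 + r^(2*k+2))\<^sup>2"
proof -
  have dv: "deriv (Qprof (Suc k)) r = -2 * (real (Suc k) * r^k) / (1 + r^(2*k+2))"
    using Q_deriv DERIV_imp_deriv by blast
  have sn: "sin (Qprof (Suc k) r) = 2 * r^Suc k / (1 + r^(2*k+2))"
    using sin_Q[of "Suc k" r] by simp
  have D: "1 + r^(2*k+2) > 0" using assms by (simp add: add_pos_nonneg)
  have p1: "r^(2*k+1) = r^k * r^k * r" by (simp add: power_add[symmetric] mult_2)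
  have p2: "r^Suc k = r^k * r" by simp
  have p3: "r^(2*k+2) = (r^k * r)\<^sup>2"
    by (simp add: power_mult_distrib power2_eq_square power_add[symmetric] mult_2)
  have gen: "(1/2) * ((-2 * (c * t) / (1 + (t*r)\<^sup>2))\<^sup>2 + c\<^sup>2 * (2 * (t*r) / (1 + (t*r)\<^sup>2))\<^sup>2 / r\<^sup>2) * r
      = 4 * c\<^sup>2 * (t*t*r) / (1 + (t*r)\<^sup>2)\<^sup>2" for c t :: real
  proof -
    define D where "D = 1 + (t*r)\<^sup>2"
    have "D > 0" unfolding D_def by (simp add: add_pos_nonneg)
    have "(1/2) * ((-2 * (c * t) / D)\<^sup>2 + c\<^sup>2 * (2 * (t*r) / D)\<^sup>2 / r\<^sup>2) * r
        = (1/2) * (4 * c\<^sup>2 * t\<^sup>2 / D\<^sup>2 + 4 * c\<^sup>2 * t\<^sup>2 * r\<^sup>2 / D\<^sup>2 / r\<^sup>2) * r"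
      by (simp add: power_divide power_mult_distrib)
    also have "\<dots> = 4 * c\<^sup>2 * (t*t*r) / D\<^sup>2"
      using assms \<open>D > 0\<close> by (simp add: field_simps power2_eq_square)
    finally show ?thesis unfolding D_def .
  qed
  show ?thesis unfolding dv sn p1 p2 p3 by (rule gen)
qed

lemma energy_Q:
  fixes k :: nat
  shows "energy (Suc k) (Qprof (Suc k)) = ennreal (2 * real (Suc k))"
proof -
  define f where "f r = 4 * (real (Suc k))\<^sup>2 * r^(2*k+1) / (1 + r^(2*k+2))\<^sup>2" for r :: real
  define F where "F r = - 2 * real (Suc k) / (1 + r^(2*k+2))" for r :: real
  have Dpos: "1 + r^(2*k+2) > 0" for r :: real
  proof -
    have "0 \<le> r^(2*k+2)" by (rule zero_le_even_power) simp
    then show ?thesis by linarith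
  qed
  have dF: "(F has_real_derivative f x) (at x)" for x
  proof -
    have dp: "((\<lambda>x. 1 + x^(2*k+2)) has_real_derivative 0 + real (2*k+2) * x^(2*k+1)) (at x)"
      using DERIV_add[OF DERIV_const[of 1] DERIV_pow[of "2*k+2" x]] by simp
    have "((\<lambda>x. - 2 * real (Suc k) / (1 + x^(2*k+2))) has_real_derivative
       (0 * (1 + x^(2*k+2)) - (- 2 * real (Suc k)) * (0 + real (2*k+2) * x^(2*k+1))) / ((1 + x^(2*k+2)) * (1 + x^(2*k+2)))) (at x)"
      using Dpos[of x] by (intro DERIV_divide[OF DERIV_const dp]) simp
    moreover have "(0 * (1 + x^(2*k+2)) - (- 2 * real (Suc k)) * (0 + real (2*k+2) * x^(2*k+1))) / ((1 + x^(2*k+2)) * (1 + x^(2*k+2))) = f x"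
      unfolding f_def power2_eq_square by (simp add: algebra_simps)
    ultimately show ?thesis unfolding F_def[abs_def] by simp
  qed
  have fc: "isCont f x" for x
    unfolding f_def using Dpos[of x] by (auto intro!: continuous_intros)
  have fnn: "0 \<le> f x" if "0 < x" for x
    unfolding f_def using that by simp
  have limA: "((F \<circ> real_of_ereal) \<longlongrightarrow> - 2 * real (Suc k)) (at_right (ereal 0))"
  proof -
    have "(F \<longlongrightarrow> F 0) (at_right 0)"
      using DERIV_isCont[OF dF[of 0]] unfolding isCont_def by (rule filterlim_mono) (auto intro: at_within_le_at)
    then show ?thesis unfolding ereal_tendsto_simps by (simp add: F_def)
  qed
  have limB: "((F \<circ> real_of_ereal) \<longlongrightarrow> 0) (at_left \<infinity>)"
  proof -
    have "filterlim (\<lambda>x::real. x^(2*k+2)) at_top at_top"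
      by (intro filterlim_pow_at_top filterlim_ident) auto
    then have "filterlim (\<lambda>x::real. 1 + x^(2*k+2)) at_top at_top"
      by (intro filterlim_tendsto_add_at_top[OF tendsto_const])
    then have "(F \<longlongrightarrow> 0) at_top" unfolding F_def
      by (intro tendsto_divide_0[OF tendsto_const] filterlim_at_top_imp_at_infinity)
    then show ?thesis unfolding ereal_tendsto_simps .
  qed
  have FTC: "set_integrable lborel (einterval 0 \<infinity>) f" "(LBINT x=0..\<infinity>. f x) = 0 - (- 2 * real (Suc k))"
    using interval_integral_FTC_nonneg[of 0 \<infinity> F f "- 2 * real (Suc k)" 0] dF fc fnn limA limB
    by (auto simp: zero_ereal_def)
  have ei: "einterval 0 \<infinity> = {0<..}" by (auto simp: einterval_iff)
  have "energy (Suc k) (Qprof (Suc k)) = (\<integral>\<^sup>+ r. ennreal (indicator {0<..} r * f r) \<partial>lborel)"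
    unfolding energy_def
  proof (intro nn_integral_cong)
    fix x :: real
    show "indicator {0<..} x * ennreal (1 / 2 * ((deriv (Qprof (Suc k)) x)\<^sup>2 + (real (Suc k))\<^sup>2 * (sin (Qprof (Suc k) x))\<^sup>2 / x\<^sup>2) * x)
        = ennreal (indicator {0<..} x * f x)"
    proof (cases "x > 0")
      case True
      show ?thesis unfolding Q_integrand[OF True] f_def using True by simp
    qed simp
  qed
  also have "\<dots> = ennreal (\<integral> r. indicator {0<..} r * f r \<partial>lborel)"
    using FTC(1) fnn unfolding ei set_integrable_def
    by (intro nn_integral_eq_integral) (auto simp: indicator_def)
  also have "(\<integral> r. indicator {0<..} r * f r \<partial>lborel) = 2 * real (Suc k)"
    using FTC(2) unfolding interval_lebesgue_integral_def set_lebesgue_integral_def ei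
    by (simp add: zero_ereal_def)
  finally show ?thesis .
qed

lemma sint_split:
  fixes f :: "real \<Rightarrow> real"
  assumes "x \<le> c" "c \<le> y" "set_integrable lborel {x..y} f"
  shows "(LINT t:{x..y}|lborel. f t) = (LINT t:{x..c}|lborel. f t) + (LINT t:{c..y}|lborel. f t)"
proof -
  have e: "{x..y} = {x..c} \<union> {c..y}" using assms by auto
  have "AE t in lborel. \<not> (t \<in> {x..c} \<and> t \<in> {c..y})"
    using AE_lborel_singleton[of c] by eventually_elim auto
  then show ?thesis unfolding e
    by (rule set_integral_Un_AE) (use assms in \<open>auto intro: set_integrable_subset\<close>)
qed

lemma cos_diff_bound:
  fixes a b :: real
  shows "\<bar>cos b - cos a\<bar> \<le> (\<bar>sin a\<bar> + \<bar>b - a\<bar>) * \<bar>b - a\<bar>"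
proof -
  define h where "h = (b - a) / 2"
  have "cos b - cos a = 2 * sin ((b + a) / 2) * sin ((a - b) / 2)" by (rule cos_diff_cos)
  also have "(b + a) / 2 = a + h" unfolding h_def by (simp add: field_simps)
  also have "(a - b) / 2 = - h" unfolding h_def by (simp add: field_simps)
  finally have eq: "\<bar>cos b - cos a\<bar> = 2 * \<bar>sin (a + h)\<bar> * \<bar>sin h\<bar>" by (simp add: abs_mult)
  have s1: "\<bar>sin (a + h)\<bar> \<le> \<bar>sin a\<bar> + \<bar>h\<bar>"
  proof -
    have "\<bar>sin (a + h)\<bar> = \<bar>sin a * cos h + cos a * sin h\<bar>" by (simp add: sin_add)
    also have "\<dots> \<le> \<bar>sin a\<bar> * \<bar>cos h\<bar> + \<bar>cos a\<bar> * \<bar>sin h\<bar>" by (simp add: abs_mult[symmetric] abs_triangle_ineq)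
    also have "\<dots> \<le> \<bar>sin a\<bar> * 1 + 1 * \<bar>h\<bar>"
      by (intro add_mono mult_mono) (auto simp: abs_sin_x_le_abs_x)
    finally show ?thesis by simp
  qed
  have s2: "\<bar>sin h\<bar> \<le> \<bar>h\<bar>" by (rule abs_sin_x_le_abs_x)
  have "2 * \<bar>sin (a + h)\<bar> * \<bar>sin h\<bar> \<le> 2 * (\<bar>sin a\<bar> + \<bar>h\<bar>) * \<bar>h\<bar>"
    using s1 s2 by (intro mult_mono) auto
  also have "\<dots> = (\<bar>sin a\<bar> + \<bar>b - a\<bar> / 2) * \<bar>b - a\<bar>"
    by (simp add: h_def abs_divide field_simps)
  also have "\<dots> \<le> (\<bar>sin a\<bar> + \<bar>b - a\<bar>) * \<bar>b - a\<bar>"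
    by (intro mult_right_mono) auto
  finally show ?thesis using eq by simp
qed

lemma sin_g_integrable:
  fixes u g :: "real \<Rightarrow> real"
  assumes "continuous_on {x..y} u" "set_integrable lborel {x..y} g"
  shows "set_integrable lborel {x..y} (\<lambda>t. \<bar>sin (u t)\<bar> * \<bar>g t\<bar>)"
proof (rule set_integrable_bound[OF set_integrable_abs[OF assms(2)]])
  have m1: "(\<lambda>t. indicator {x..y} t *\<^sub>R u t) \<in> borel_measurable borel"
    by (rule borel_measurable_continuous_on_indicator) (use assms in auto)
  have m2: "(\<lambda>t. indicator {x..y} t *\<^sub>R g t) \<in> borel_measurable borel"
    using assms(2) unfolding set_integrable_def by (auto dest: borel_measurable_integrable)
  have "(\<lambda>t. \<bar>sin (indicator {x..y} t *\<^sub>R u t)\<bar> * \<bar>indicator {x..y} t *\<^sub>R g t\<bar>) \<in> borel_measurable borel"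
    using m1 m2 by measurable
  moreover have "(\<lambda>t. \<bar>sin (indicator {x..y} t *\<^sub>R u t)\<bar> * \<bar>indicator {x..y} t *\<^sub>R g t\<bar>)
     = (\<lambda>t. indicator {x..y} t *\<^sub>R (\<bar>sin (u t)\<bar> * \<bar>g t\<bar>))"
    by (auto simp: indicator_def)
  ultimately show "set_borel_measurable lborel {x..y} (\<lambda>t. \<bar>sin (u t)\<bar> * \<bar>g t\<bar>)"
    unfolding set_borel_measurable_def by simp
  show "AE t in lborel. t \<in> {x..y} \<longrightarrow> norm (\<bar>sin (u t)\<bar> * \<bar>g t\<bar>) \<le> norm \<bar>g t\<bar>"
    by (auto simp: abs_mult intro!: mult_left_le_one_le)
qed

lemma chain_piece:
  fixes u g :: "real \<Rightarrow> real"
  assumes xy: "x \<le> y" and gi: "set_integrable lborel {x..y} g"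
    and ug: "u y - u x = (LINT t:{x..y}|lborel. g t)"
    and cu: "continuous_on {x..y} u"
    and om: "\<And>t. t \<in> {x..y} \<Longrightarrow> \<bar>u t - u x\<bar> \<le> \<omega>"
  shows "\<bar>cos (u y) - cos (u x)\<bar> \<le> (LINT t:{x..y}|lborel. \<bar>sin (u t)\<bar> * \<bar>g t\<bar>) + 2 * \<omega> * (LINT t:{x..y}|lborel. \<bar>g t\<bar>)"
proof -
  define s where "s = \<bar>sin (u x)\<bar>"
  define J where "J = (LINT t:{x..y}|lborel. \<bar>g t\<bar>)"
  define I where "I = (LINT t:{x..y}|lborel. \<bar>sin (u t)\<bar> * \<bar>g t\<bar>)"
  have gai: "set_integrable lborel {x..y} (\<lambda>t. \<bar>g t\<bar>)" by (rule set_integrable_abs[OF gi])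
  have J0: "0 \<le> J" unfolding J_def set_lebesgue_integral_def by (intro Bochner_Integration.integral_nonneg) auto
  have om0: "0 \<le> \<omega>" using om[of x] xy by auto
  have dJ: "\<bar>u y - u x\<bar> \<le> J" unfolding ug J_def
    using set_integral_norm_bound[OF gi] by simp
  have dom: "\<bar>u y - u x\<bar> \<le> \<omega>" using om[of y] xy by auto
  have "\<bar>cos (u y) - cos (u x)\<bar> \<le> (s + \<bar>u y - u x\<bar>) * \<bar>u y - u x\<bar>"
    unfolding s_def by (rule cos_diff_bound)
  also have "\<dots> \<le> (s + \<omega>) * J"
    using dJ dom J0 by (intro mult_mono) (auto simp: s_def)
  finally have A: "\<bar>cos (u y) - cos (u x)\<bar> \<le> (s + \<omega>) * J" .
  have "(s - \<omega>) * J = (LINT t:{x..y}|lborel. (s - \<omega>) * \<bar>g t\<bar>)"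
    unfolding J_def by simp
  also have "\<dots> \<le> I" unfolding I_def
  proof (rule set_integral_mono)
    show "set_integrable lborel {x..y} (\<lambda>t. (s - \<omega>) * \<bar>g t\<bar>)"
      using gai by (rule set_integrable_mult_right)
    show "set_integrable lborel {x..y} (\<lambda>t. \<bar>sin (u t)\<bar> * \<bar>g t\<bar>)"
      by (rule sin_g_integrable[OF cu gi])
    fix t assume t: "t \<in> {x..y}"
    have "\<bar>sin (u t) - sin (u x)\<bar> \<le> \<bar>u t - u x\<bar>"
    proof -
      have "sin (u t) - sin (u x) = 2 * sin ((u t - u x) / 2) * cos ((u t + u x) / 2)"
        by (rule sin_diff_sin)
      then have "\<bar>sin (u t) - sin (u x)\<bar> = 2 * \<bar>sin ((u t - u x) / 2)\<bar> * \<bar>cos ((u t + u x) / 2)\<bar>"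
        by (simp add: abs_mult)
      also have "\<dots> \<le> 2 * \<bar>(u t - u x) / 2\<bar> * 1"
        using abs_sin_x_le_abs_x[of "(u t - u x) / 2"] abs_cos_le_one[of "(u t + u x) / 2"]
        by (intro mult_mono) auto
      also have "\<dots> = \<bar>u t - u x\<bar>" by simp
      finally show ?thesis .
    qed
    then have "s - \<omega> \<le> \<bar>sin (u t)\<bar>" using om[OF t] unfolding s_def by linarith
    then show "(s - \<omega>) * \<bar>g t\<bar> \<le> \<bar>sin (u t)\<bar> * \<bar>g t\<bar>"
      by (intro mult_right_mono) auto
  qed
  finally have B: "(s - \<omega>) * J \<le> I" .
  from A B show ?thesis unfolding I_def[symmetric] J_def[symmetric]
    by (simp add: algebra_simps)
qed

lemma chain_ineq:
  fixes u g :: "real \<Rightarrow> real"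
  assumes ab: "a \<le> b" and gi: "set_integrable lborel {a..b} g"
    and ug: "\<And>x y. a \<le> x \<Longrightarrow> x \<le> y \<Longrightarrow> y \<le> b \<Longrightarrow> u y - u x = (LINT t:{x..y}|lborel. g t)"
    and cu: "continuous_on {a..b} u"
  shows "\<bar>cos (u b) - cos (u a)\<bar> \<le> (LINT t:{a..b}|lborel. \<bar>sin (u t)\<bar> * \<bar>g t\<bar>)"
proof -
  define I where "I x y = (LINT t:{x..y}|lborel. \<bar>sin (u t)\<bar> * \<bar>g t\<bar>)" for x y
  define J where "J x y = (LINT t:{x..y}|lborel. \<bar>g t\<bar>)" for x y
  have gsub: "set_integrable lborel {x..y} g" if "a \<le> x" "y \<le> b" for x y
    using that by (intro set_integrable_subset[OF gi]) auto
  have csub: "continuous_on {x..y} u" if "a \<le> x" "y \<le> b" for x y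
    using that by (intro continuous_on_subset[OF cu]) auto
  have I0: "0 \<le> I x y" for x y unfolding I_def set_lebesgue_integral_def
    by (intro Bochner_Integration.integral_nonneg) auto
  have J0: "0 \<le> J x y" for x y unfolding J_def set_lebesgue_integral_def
    by (intro Bochner_Integration.integral_nonneg) auto
  have main: "\<bar>cos (u b) - cos (u a)\<bar> \<le> I a b + 2 * \<omega> * J a b" if om: "\<omega> > 0" for \<omega>
  proof -
    have "uniformly_continuous_on {a..b} u"
      by (rule compact_uniformly_continuous[OF cu]) auto
    then obtain \<delta> where \<delta>: "\<delta> > 0" "\<And>x x'. x \<in> {a..b} \<Longrightarrow> x' \<in> {a..b} \<Longrightarrow> dist x' x < \<delta> \<Longrightarrow> dist (u x') (u x) < \<omega>"
      unfolding uniformly_continuous_on_def using om by metis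
    have ind: "\<forall>x y. a \<le> x \<longrightarrow> x \<le> y \<longrightarrow> y \<le> b \<longrightarrow> y - x \<le> real n * (\<delta>/2) \<longrightarrow>
          \<bar>cos (u y) - cos (u x)\<bar> \<le> I x y + 2 * \<omega> * J x y" for n
    proof (induction n)
      case 0
      show ?case
      proof (intro allI impI)
        fix x y assume "a \<le> x" "x \<le> y" "y \<le> b" "y - x \<le> real 0 * (\<delta>/2)"
        then have "y = x" by simp
        then show "\<bar>cos (u y) - cos (u x)\<bar> \<le> I x y + 2 * \<omega> * J x y"
          using I0[of x y] J0[of x y] om by simp
      qed
    next
      case (Suc n)
      show ?case
      proof (intro allI impI)
        fix x y assume xy: "a \<le> x" "x \<le> y" "y \<le> b" "y - x \<le> real (Suc n) * (\<delta>/2)"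
        have piece: "\<bar>cos (u y') - cos (u x')\<bar> \<le> I x' y' + 2 * \<omega> * J x' y'"
          if "a \<le> x'" "x' \<le> y'" "y' \<le> b" "y' - x' \<le> \<delta>/2" for x' y'
          unfolding I_def J_def
        proof (rule chain_piece)
          show "x' \<le> y'" by fact
          show "set_integrable lborel {x'..y'} g" using that by (intro gsub) auto
          show "u y' - u x' = (LINT t:{x'..y'}|lborel. g t)" using that by (intro ug) auto
          show "continuous_on {x'..y'} u" using that by (intro csub) auto
          fix t assume t: "t \<in> {x'..y'}"
          have "dist (u t) (u x') < \<omega>"
            using that t \<delta>(1) by (intro \<delta>(2)) (auto simp: dist_real_def)
          then show "\<bar>u t - u x'\<bar> \<le> \<omega>" by (simp add: dist_real_def)
        qed
        show "\<bar>cos (u y) - cos (u x)\<bar> \<le> I x y + 2 * \<omega> * J x y"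
        proof (cases "y - x \<le> \<delta>/2")
          case True
          then show ?thesis using piece xy by auto
        next
          case False
          define c where "c = x + \<delta>/2"
          have c: "x \<le> c" "c \<le> y" "y - c \<le> real n * (\<delta>/2)"
            using False xy \<delta>(1) unfolding c_def by (auto simp: algebra_simps)
          have h1: "\<bar>cos (u y) - cos (u c)\<bar> \<le> I c y + 2 * \<omega> * J c y"
            using Suc.IH c xy by auto
          have h2: "\<bar>cos (u c) - cos (u x)\<bar> \<le> I x c + 2 * \<omega> * J x c"
            using piece[of x c] c xy unfolding c_def by auto
          have Is: "I x y = I x c + I c y" unfolding I_def
            using c xy by (intro sint_split sin_g_integrable csub gsub) auto
          have Js: "J x y = J x c + J c y" unfolding J_def
            using c xy by (intro sint_split set_integrable_abs gsub) auto
          show ?thesis using h1 h2 unfolding Is Js by (simp add: algebra_simps abs_triangle_ineq4 order_trans[OF abs_triangle_ineq])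
        qed
      qed
    qed
    obtain n :: nat where n: "(b - a) / (\<delta>/2) \<le> real n" using real_arch_simple by blast
    have "b - a \<le> real n * (\<delta>/2)" using n \<delta>(1) by (simp add: field_simps)
    then show ?thesis using ind[of n] ab by auto
  qed
  show ?thesis unfolding I_def[symmetric]
  proof (rule field_le_epsilon)
    fix e :: real assume e: "e > 0"
    define \<omega> where "\<omega> = e / (2 * (J a b + 1))"
    have om: "\<omega> > 0" unfolding \<omega>_def using e J0[of a b] by auto
    have "2 * \<omega> * J a b \<le> e"
    proof -
      have "2 * \<omega> * J a b = e * (J a b / (J a b + 1))" unfolding \<omega>_def using J0[of a b] by (simp add: field_simps)
      also have "\<dots> \<le> e * 1" using J0[of a b] e by (intro mult_left_mono) auto
      finally show ?thesis by simp
    qed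
    then show "\<bar>cos (u b) - cos (u a)\<bar> \<le> I a b + e" using main[OF om] by linarith
  qed
qed

lemma amgm:
  fixes r d s c :: real
  assumes "r > 0" "c \<ge> 0"
  shows "c * (\<bar>s\<bar> * \<bar>d\<bar>) \<le> (1/2) * (d\<^sup>2 + c\<^sup>2 * s\<^sup>2 / r\<^sup>2) * r"
proof -
  have "(1/2) * (d\<^sup>2 + c\<^sup>2 * s\<^sup>2 / r\<^sup>2) * r - c * (\<bar>s\<bar> * \<bar>d\<bar>) = (\<bar>d\<bar> * r - c * \<bar>s\<bar>)\<^sup>2 / (2 * r)"
    using assms by (simp add: field_simps power2_eq_square)
  moreover have "(\<bar>d\<bar> * r - c * \<bar>s\<bar>)\<^sup>2 / (2 * r) \<ge> 0" using assms by simp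
  ultimately show ?thesis by linarith
qed

lemma energy_lower:
  fixes u g :: "real \<Rightarrow> real" and m :: nat and \<epsilon> r0 R :: real
  assumes e: "0 < \<epsilon>" "\<epsilon> \<le> r0" "r0 \<le> R" and cu: "continuous_on {0..} u"
    and gi: "\<And>a b. 0 < a \<Longrightarrow> a \<le> b \<Longrightarrow> set_integrable lborel {a..b} g"
    and ug: "\<And>a b. 0 < a \<Longrightarrow> a \<le> b \<Longrightarrow> u b - u a = (LINT t:{a..b}|lborel. g t)"
  shows "ennreal (real m * (\<bar>cos (u r0) - cos (u \<epsilon>)\<bar> + \<bar>cos (u R) - cos (u r0)\<bar>)) \<le> energy m u"
proof -
  have cs: "continuous_on {x..y} u" if "0 \<le> x" for x y
    using that by (intro continuous_on_subset[OF cu]) auto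
  have ae: "AE x in lborel. x \<in> {\<epsilon>/2<..<2*R} \<longrightarrow> (u has_real_derivative g x) (at x)"
    using e by (intro deriv_ae[OF gi ug]) auto
  define I where "I x y = (LINT t:{x..y}|lborel. \<bar>sin (u t)\<bar> * \<bar>g t\<bar>)" for x y
  have c1: "\<bar>cos (u r0) - cos (u \<epsilon>)\<bar> \<le> I \<epsilon> r0" unfolding I_def
    using e by (intro chain_ineq gi ug cs) auto
  have c2: "\<bar>cos (u R) - cos (u r0)\<bar> \<le> I r0 R" unfolding I_def
    using e by (intro chain_ineq gi ug cs) auto
  have sgi: "set_integrable lborel {\<epsilon>..R} (\<lambda>t. \<bar>sin (u t)\<bar> * \<bar>g t\<bar>)"
    using e by (intro sin_g_integrable cs gi) auto
  have split: "I \<epsilon> R = I \<epsilon> r0 + I r0 R" unfolding I_def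
    using e sgi by (intro sint_split) auto
  have "ennreal (real m * (\<bar>cos (u r0) - cos (u \<epsilon>)\<bar> + \<bar>cos (u R) - cos (u r0)\<bar>)) \<le> ennreal (real m * I \<epsilon> R)"
    using c1 c2 split by (intro ennreal_leI mult_left_mono) auto
  also have "real m * I \<epsilon> R = (\<integral>t. real m * (\<bar>sin (u t)\<bar> * \<bar>g t\<bar>) * indicator {\<epsilon>..R} t \<partial>lborel)"
    unfolding I_def set_lebesgue_integral_def by (simp add: mult_ac)
  also have "ennreal \<dots> = (\<integral>\<^sup>+t. ennreal (real m * (\<bar>sin (u t)\<bar> * \<bar>g t\<bar>) * indicator {\<epsilon>..R} t) \<partial>lborel)"
  proof (rule nn_integral_eq_integral[symmetric])
    show "integrable lborel (\<lambda>t. real m * (\<bar>sin (u t)\<bar> * \<bar>g t\<bar>) * indicator {\<epsilon>..R} t)"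
      using set_integrable_mult_right[of "real m", OF sgi] unfolding set_integrable_def
      by (simp add: mult_ac)
  qed auto
  also have "\<dots> \<le> energy m u" unfolding energy_def
  proof (rule nn_integral_mono_AE)
    show "AE t in lborel. ennreal (real m * (\<bar>sin (u t)\<bar> * \<bar>g t\<bar>) * indicator {\<epsilon>..R} t)
        \<le> indicator {0<..} t * ennreal (1 / 2 * ((deriv u t)\<^sup>2 + (real m)\<^sup>2 * (sin (u t))\<^sup>2 / t\<^sup>2) * t)"
      using ae
    proof eventually_elim
      case (elim t)
      show ?case
      proof (cases "t \<in> {\<epsilon>..R}")
        case True
        then have t0: "t > 0" and tin: "t \<in> {\<epsilon>/2<..<2*R}" using e by auto
        have "deriv u t = g t" using elim tin DERIV_imp_deriv by blast
        then have "real m * (\<bar>sin (u t)\<bar> * \<bar>g t\<bar>) \<le> 1 / 2 * ((deriv u t)\<^sup>2 + (real m)\<^sup>2 * (sin (u t))\<^sup>2 / t\<^sup>2) * t"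
          using amgm[OF t0, of "real m" "sin (u t)" "g t"] by simp
        then show ?thesis using True t0 by (simp add: ennreal_leI)
      qed simp
    qed
  qed
  finally show ?thesis .
qed

theorem lemma2p1:
  fixes m :: nat and \<delta>1 :: real
  assumes "m \<ge> 1" and "\<delta>1 > 0"
  shows "\<exists>\<delta>2 > 0. \<forall>u \<in> E0 m.
           energy m u \<le> 2 * energy m (Qprof m) - ennreal \<delta>1 \<longrightarrow>
           (\<forall>r \<ge> 0. \<bar>u r\<bar> \<le> pi - \<delta>2)"
proof -
  obtain k where mk: "m = Suc k" using assms(1) by (cases m) auto
  have m0: "real m > 0" using assms(1) by simp
  define \<delta>2 where "\<delta>2 = min (pi/2) (sqrt (\<delta>1 / (4 * real m)))"
  have q0: "\<delta>1 / (4 * real m) > 0" using assms(2) m0 by simp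
  have d2pos: "\<delta>2 > 0" unfolding \<delta>2_def using q0 by simp
  have d2le: "\<delta>2 \<le> pi/2" unfolding \<delta>2_def by simp
  have d2sq: "\<delta>2\<^sup>2 \<le> \<delta>1 / (4 * real m)"
  proof -
    have "\<delta>2 \<le> sqrt (\<delta>1 / (4 * real m))" unfolding \<delta>2_def by simp
    then have "\<delta>2\<^sup>2 \<le> (sqrt (\<delta>1 / (4 * real m)))\<^sup>2" using d2pos by (intro power_mono) auto
    also have "\<dots> = \<delta>1 / (4 * real m)" using q0 by simp
    finally show ?thesis .
  qed
  have cosb: "1 - cos \<delta>2 \<le> \<delta>2\<^sup>2"
    using cos_diff_bound[where a=0 and b="\<delta>2"] d2pos by (simp add: power2_eq_square)
  have cnn: "cos \<delta>2 \<ge> 0" using d2pos d2le by (intro cos_ge_zero) auto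
  have key: "4 * real m - \<delta>1 < 2 * real m * (1 + cos \<delta>2)"
  proof -
    have "2 * real m * (1 - cos \<delta>2) \<le> 2 * real m * (\<delta>1 / (4 * real m))"
      using cosb d2sq m0 by (intro mult_left_mono) auto
    also have "\<dots> = \<delta>1 / 2" using m0 by (simp add: field_simps)
    finally show ?thesis using assms(2) by (simp add: algebra_simps)
  qed
  have EQ: "energy m (Qprof m) = ennreal (2 * real m)" unfolding mk by (rule energy_Q)
  define C where "C = max 0 (4 * real m - \<delta>1)"
  have C0: "C \<ge> 0" unfolding C_def by simp
  have EQ2: "2 * energy m (Qprof m) - ennreal \<delta>1 = ennreal C"
  proof -
    have "2 * energy m (Qprof m) = ennreal (4 * real m)"
    proof -
      have "ennreal (2 * (2 * real m)) = ennreal 2 * ennreal (2 * real m)"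
        by (rule ennreal_mult) auto
      then have "ennreal (4 * real m) = ennreal 2 * ennreal (2 * real m)" by simp
      then show ?thesis unfolding EQ by simp
    qed
    then have "2 * energy m (Qprof m) - ennreal \<delta>1 = ennreal (4 * real m - \<delta>1)"
      using assms(2) by (simp add: ennreal_minus)
    also have "\<dots> = ennreal C" unfolding C_def by (simp add: ennreal_max_0)
    finally show ?thesis .
  qed
  show ?thesis
  proof (intro exI[of _ \<delta>2] conjI d2pos ballI impI allI)
    fix u and r :: real assume uE: "u \<in> E0 m" and Eu: "energy m u \<le> 2 * energy m (Qprof m) - ennreal \<delta>1" and r: "r \<ge> 0"
    have Eu': "energy m u \<le> ennreal C" using Eu EQ2 by simp
    have lac: "loc_abs_cont u" and cu: "continuous_on {0..} u" and lim0: "(u \<longlongrightarrow> 0) (at_right 0)"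
      and liminf: "(u \<longlongrightarrow> 0) at_top" using uE unfolding E0_def by auto
    obtain g where g: "\<And>a b. 0 < a \<Longrightarrow> a \<le> b \<Longrightarrow> set_integrable lborel {a..b} g \<and> u b - u a = (LBINT t=a..b. g t)"
      using lac unfolding loc_abs_cont_def by blast
    have gi: "\<And>a b. 0 < a \<Longrightarrow> a \<le> b \<Longrightarrow> set_integrable lborel {a..b} g" using g by blast
    have ug: "\<And>a b. 0 < a \<Longrightarrow> a \<le> b \<Longrightarrow> u b - u a = (LINT t:{a..b}|lborel. g t)"
      using g interval_integral_Icc by metis
    have u0: "u 0 = 0"
    proof -
      have "(u \<longlongrightarrow> u 0) (at 0 within {0..})" using cu unfolding continuous_on_def by auto
      then have "(u \<longlongrightarrow> u 0) (at_right 0)" by (rule tendsto_within_subset) auto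
      then show ?thesis using lim0 by (rule tendsto_unique[rotated]) simp
    qed
    show "\<bar>u r\<bar> \<le> pi - \<delta>2"
    proof (rule ccontr)
      assume "\<not> \<bar>u r\<bar> \<le> pi - \<delta>2"
      then have big: "pi - \<delta>2 \<le> \<bar>u r\<bar>" by simp
      have pd: "pi - \<delta>2 > 0" using d2le pi_gt_zero by linarith
      have cabs: "continuous_on {0..r} (\<lambda>t. \<bar>u t\<bar>)"
        by (intro continuous_intros continuous_on_subset[OF cu]) auto
      obtain r0 where r0: "0 \<le> r0" "r0 \<le> r" "\<bar>u r0\<bar> = pi - \<delta>2"
        using IVT'[of "\<lambda>t. \<bar>u t\<bar>" 0 "pi - \<delta>2" r] cabs big pd r u0 by auto
      have r0pos: "r0 > 0" using r0 u0 pd by (cases "r0 = 0") auto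
      have cr0: "cos (u r0) = - cos \<delta>2"
      proof -
        have "cos (u r0) = cos \<bar>u r0\<bar>" by simp
        also have "\<dots> = - cos \<delta>2" unfolding r0(3) by (simp add: cos_diff)
        finally show ?thesis .
      qed
      define c0 where "c0 = cos (u r0)"
      have bnd: "real m * (\<bar>c0 - cos (u \<epsilon>)\<bar> + \<bar>cos (u R) - c0\<bar>) \<le> C"
        if "0 < \<epsilon>" "\<epsilon> \<le> r0" "r0 \<le> R" for \<epsilon> R
      proof -
        have "ennreal (real m * (\<bar>c0 - cos (u \<epsilon>)\<bar> + \<bar>cos (u R) - c0\<bar>)) \<le> energy m u"
          unfolding c0_def using that by (intro energy_lower[OF _ _ _ cu gi ug])
        also have "\<dots> \<le> ennreal C" by (rule Eu')
        finally show ?thesis using C0 by (simp add: ennreal_le_iff)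
      qed
      have bnd2: "real m * (\<bar>c0 - 1\<bar> + \<bar>cos (u R) - c0\<bar>) \<le> C" if "r0 \<le> R" for R
      proof (rule tendsto_upperbound)
        show "((\<lambda>\<epsilon>. real m * (\<bar>c0 - cos (u \<epsilon>)\<bar> + \<bar>cos (u R) - c0\<bar>)) \<longlongrightarrow> real m * (\<bar>c0 - 1\<bar> + \<bar>cos (u R) - c0\<bar>)) (at_right 0)"
        proof -
          have "((\<lambda>\<epsilon>. cos (u \<epsilon>)) \<longlongrightarrow> cos 0) (at_right 0)"
            by (intro tendsto_cos lim0)
          then show ?thesis by (auto intro!: tendsto_intros)
        qed
        show "\<forall>\<^sub>F \<epsilon> in at_right 0. real m * (\<bar>c0 - cos (u \<epsilon>)\<bar> + \<bar>cos (u R) - c0\<bar>) \<le> C"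
          unfolding eventually_at_right_field using r0pos that
          by (intro exI[of _ r0]) (auto intro!: bnd)
      qed simp
      have bnd3: "real m * (\<bar>c0 - 1\<bar> + \<bar>1 - c0\<bar>) \<le> C"
      proof (rule tendsto_upperbound)
        show "((\<lambda>R. real m * (\<bar>c0 - 1\<bar> + \<bar>cos (u R) - c0\<bar>)) \<longlongrightarrow> real m * (\<bar>c0 - 1\<bar> + \<bar>1 - c0\<bar>)) at_top"
        proof -
          have "((\<lambda>R. cos (u R)) \<longlongrightarrow> cos 0) at_top"
            by (intro tendsto_cos liminf)
          then show ?thesis by (auto intro!: tendsto_intros)
        qed
        show "\<forall>\<^sub>F R in at_top. real m * (\<bar>c0 - 1\<bar> + \<bar>cos (u R) - c0\<bar>) \<le> C"
          using eventually_ge_at_top[of r0] by eventually_elim (rule bnd2)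
      qed simp
      have "\<bar>c0 - 1\<bar> = 1 + cos \<delta>2" unfolding c0_def cr0 using cnn by simp
      then have "2 * real m * (1 + cos \<delta>2) \<le> C" using bnd3 by (simp add: abs_minus_commute algebra_simps)
      moreover have "2 * real m * (1 + cos \<delta>2) > 0" using m0 cnn by (simp add: add_pos_nonneg)
      ultimately have "2 * real m * (1 + cos \<delta>2) \<le> 4 * real m - \<delta>1" unfolding C_def by linarith
      then show False using key by linarith
    qed
  qed
qed

end
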